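(* Let $p$ be a program. Then $p$ is in $\to_{\mathrm{ond}}$-normal form (there is no $q$ with $p\to_{\mathrm{ond}} q$) if and only if $\mathrm{onorm}(p)$.
   Context: Syntax (split presentation). Terms: $t,u,s ::= x \mid \lambda x.t \mid t\,u$. Values: $v ::= \lambda x.t$ (variables are not values). Environments: $E ::= \epsilon \mid E[x\leftarrow t]$. Programs: $p ::= (t,E)$. In $E[x\leftarrow t]$ and $(u,E[x\leftarrow t])$ the variable $x$ is bound in $E$ and $u$; everything is up to $\alpha$-renaming, appended ES bind fresh variables. Appending: $(t,E)@[x\leftarrow u] := (t,E[x\leftarrow u])$. Inert terms and fireballs: $i ::= x \mid i\,f$, $f ::= v \mid i$. Open term evaluation contexts: $\mathcal{H} ::= \langle\cdot\rangle \mid \mathcal{H}\,t \mid i\,\mathcal{H}$. Term contexts: $C ::= \langle\cdot\rangle \mid C\,t \mid t\,C$. Environment contexts: $G ::= E[x\leftarrow C] \mid G[x\leftarrow u]$. Program contexts: $P ::= (C,E) \mid (t,G)$, with $(C,E)@[x\leftarrow u] := (C,E[x\leftarrow u])$, $(t,G)@[x\leftarrow u] := (t,G[x\leftarrow u])$. Plugging: $(C,E)\langle (t,E')\rangle := (C\langle t\rangle, E'E)$; $(u,E[x\leftarrow C])\langle (t,E')\rangle := (u, E[x\leftarrow C\langle t\rangle]E')$; $(u,G[x\leftarrow s])\langle (t,E)\rangle := ((u,G)\langle(t,E)\rangle)@[x\leftarrow s]$; $P\langle t\rangle := P\langle (t,\epsilon)\rangle$. For $p=(t,E)$, $p@[x\leftarrow\mathcal{H}]$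 denotes the program context $(t,E[x\leftarrow\mathcal{H}])$. Look-up $P(x)$: $P(x)=t$ if the list of ES of $P$ contains $[x\leftarrow t]$ with $t$ a term, $\bot$ otherwise. $v^{\alpha}$ is a copy of $v$ with fresh bound variables. Needed variables: $nv(x)=\{x\}$, $nv(\lambda x.t)=\emptyset$, $nv(t\,u)=nv(t)\cup nv(u)$; $nv((t,\epsilon))=nv(t)$, $nv((t,E[x\leftarrow u]))=nv((t,E))$ if $x\notin nv((t,E))$, else $(nv((t,E))\setminus\{x\})\cup nv(u)$; $nv(\langle\cdot\rangle)=\emptyset$, $nv(\mathcal{H}\,t)=nv(\mathcal{H})$, $nv(i\,\mathcal{H})=nv(i)\cup nv(\mathcal{H})$. Open evaluation contexts $P\in\mathcal{E}_{{\mathcal{V}}}$, inductively: $(\mathcal{H},\epsilon)\in\mathcal{E}_{nv(\mathcal{H})}$; if $P\in\mathcal{E}_{{\mathcal{V}}}$, $x\in{\mathcal{V}}$, $i$ inert then $P@[x\leftarrow i]\in\mathcal{E}_{({\mathcal{V}}\setminus\{x\})\cup nv(i)}$; if $P\in\mathcal{E}_{{\mathcal{V}}}$, $x\notin{\mathcal{V}}$ then $P@[x\leftarrow t]\in\mathcal{E}_{{\mathcal{V}}}$; if $P\in\mathcal{E}_{{\mathcal{V}}}$, $x\notin{\mathcal{V}}$ then $P\langle x\rangle@[x\leftarrow\mathcal{H}]\in\mathcal{E}_{{\mathcal{V}}\cup nv(\mathcal{H})}$ ($x$ not in the domain of $P$). Open CbNeed rules, for $P\in\mathcal{E}_{{\mathcal{V}}}$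 for some ${\mathcal{V}}$: $P\langle(\lambda x.t)u\rangle \to_{\mathrm{om}} P\langle (t,[x\leftarrow u])\rangle$; $P\langle x\rangle\to_{\mathrm{oe}} P\langle v^{\alpha}\rangle$ if $P(x)=v$; $\to_{\mathrm{ond}} := \to_{\mathrm{om}}\cup\to_{\mathrm{oe}}$. Predicates on programs, inductively: $\mathrm{inert}((i,\epsilon))$ for $i$ inert; if $\mathrm{inert}(p)$ and $x\in nv(p)$ then $\mathrm{inert}(p@[x\leftarrow i])$ for $i$ inert; if $\mathrm{inert}(p)$ and $x\notin nv(p)$ then $\mathrm{inert}(p@[x\leftarrow t])$ for any $t$. $\mathrm{abs}((v,\epsilon))$ for $v$ a value; if $\mathrm{abs}(p)$ then $\mathrm{abs}(p@[x\leftarrow t])$ for any $t$. $\mathrm{onorm}(p)$ iff $\mathrm{inert}(p)$ or $\mathrm{abs}(p)$. *)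

theory Defs
  imports Main
begin

datatype trm = Var nat | Lam nat trm | App trm trm

datatype ctx = Hole | CAppL ctx trm | CAppR trm ctx

text \<open>Environments in presentation order: E[x<-t] is E @ [(x,t)];
  a binder scopes over the main term and over the ES to its left.\<close>
type_synonym env = "(nat \<times> trm) list"
type_synonym prog = "trm \<times> env"

text \<open>Program contexts: (C,E), or (u, E1[x<-C]E2) (i.e. G = E1[x<-C] followed by E2).\<close>
datatype pctx = PCtx ctx env | PEnv trm env nat ctx env

fun fv :: "trm \<Rightarrow> nat set" where
  "fv (Var x) = {x}"
| "fv (Lam x t) = fv t - {x}"
| "fv (App t u) = fv t \<union> fv u"

fun is_value :: "trm \<Rightarrow> bool" where
  "is_value (Lam x t) = True"
| "is_value _ = False"

inductive inert_t :: "trm \<Rightarrow> bool" where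
  "inert_t (Var x)"
| "inert_t i \<Longrightarrow> (is_value f \<or> inert_t f) \<Longrightarrow> inert_t (App i f)"

inductive isH :: "ctx \<Rightarrow> bool" where
  "isH Hole"
| "isH H \<Longrightarrow> isH (CAppL H t)"
| "inert_t i \<Longrightarrow> isH H \<Longrightarrow> isH (CAppR i H)"

fun cplug :: "ctx \<Rightarrow> trm \<Rightarrow> trm" where
  "cplug Hole t = t"
| "cplug (CAppL C u) t = App (cplug C t) u"
| "cplug (CAppR u C) t = App u (cplug C t)"

fun nv_t :: "trm \<Rightarrow> nat set" where
  "nv_t (Var x) = {x}"
| "nv_t (Lam x t) = {}"
| "nv_t (App t u) = nv_t t \<union> nv_t u"

fun nv_c :: "ctx \<Rightarrow> nat set" where
  "nv_c Hole = {}"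
| "nv_c (CAppL C t) = nv_c C"
| "nv_c (CAppR i C) = nv_t i \<union> nv_c C"

fun nvE :: "nat set \<Rightarrow> env \<Rightarrow> nat set" where
  "nvE S [] = S"
| "nvE S ((x,u) # E) = nvE (if x \<notin> S then S else (S - {x}) \<union> nv_t u) E"

definition nvp :: "prog \<Rightarrow> nat set" where
  "nvp p = nvE (nv_t (fst p)) (snd p)"

definition prog_app :: "prog \<Rightarrow> nat \<Rightarrow> trm \<Rightarrow> prog" where
  "prog_app p x u = (fst p, snd p @ [(x, u)])"

fun pctx_app :: "pctx \<Rightarrow> nat \<Rightarrow> trm \<Rightarrow> pctx" where
  "pctx_app (PCtx C E) y s = PCtx C (E @ [(y, s)])"
| "pctx_app (PEnv u E1 x C E2) y s = PEnv u E1 x C (E2 @ [(y, s)])"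

fun pplug :: "pctx \<Rightarrow> prog \<Rightarrow> prog" where
  "pplug (PCtx C E) (t, E') = (cplug C t, E' @ E)"
| "pplug (PEnv u E1 x C E2) (t, E') = (u, E1 @ [(x, cplug C t)] @ E' @ E2)"

text \<open>The ES of P whose content is a term (the ES containing the hole is excluded).\<close>
fun pes :: "pctx \<Rightarrow> env" where
  "pes (PCtx C E) = E"
| "pes (PEnv u E1 x C E2) = E1 @ E2"

fun pdom :: "pctx \<Rightarrow> nat set" where
  "pdom (PCtx C E) = fst ` set E"
| "pdom (PEnv u E1 x C E2) = fst ` set E1 \<union> {x} \<union> fst ` set E2"

inductive evctx :: "pctx \<Rightarrow> nat set \<Rightarrow> bool" where
  "isH H \<Longrightarrow> evctx (PCtx H []) (nv_c H)"
| "evctx P V \<Longrightarrow> x \<in> V \<Longrightarrow> inert_t i \<Longrightarrow> evctx (pctx_app P x i) ((V - {x}) \<union> nv_t i)"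
| "evctx P V \<Longrightarrow> x \<notin> V \<Longrightarrow> evctx (pctx_app P x t) V"
| "evctx P V \<Longrightarrow> x \<notin> V \<Longrightarrow> x \<notin> pdom P \<Longrightarrow> isH H \<Longrightarrow> pplug P (Var x, []) = (u, E)
     \<Longrightarrow> evctx (PEnv u E x H []) (V \<union> nv_c H)"

definition step_om :: "prog \<Rightarrow> prog \<Rightarrow> bool" where
  "step_om p q \<longleftrightarrow> (\<exists>P V x t u. evctx P V \<and> p = pplug P (App (Lam x t) u, [])
                                  \<and> q = pplug P (t, [(x, u)]))"

text \<open>The alpha-copy v^alpha is alpha-equivalent to v; we use v itself (only the existence of
  a step matters for normal forms).\<close>
definition step_oe :: "prog \<Rightarrow> prog \<Rightarrow> bool" where
  "step_oe p q \<longleftrightarrow> (\<exists>P V x v. evctx P V \<and> (x, v) \<in> set (pes P) \<and> is_value v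
                                \<and> p = pplug P (Var x, []) \<and> q = pplug P (v, []))"

definition step_ond :: "prog \<Rightarrow> prog \<Rightarrow> bool" where
  "step_ond p q \<longleftrightarrow> step_om p q \<or> step_oe p q"

inductive inert_p :: "prog \<Rightarrow> bool" where
  "inert_t i \<Longrightarrow> inert_p (i, [])"
| "inert_p p \<Longrightarrow> x \<in> nvp p \<Longrightarrow> inert_t i \<Longrightarrow> inert_p (prog_app p x i)"
| "inert_p p \<Longrightarrow> x \<notin> nvp p \<Longrightarrow> inert_p (prog_app p x t)"

inductive abs_p :: "prog \<Rightarrow> bool" where
  "is_value v \<Longrightarrow> abs_p (v, [])"
| "abs_p p \<Longrightarrow> abs_p (prog_app p x t)"

definition onorm :: "prog \<Rightarrow> bool" where
  "onorm p \<longleftrightarrow> inert_p p \<or> abs_p p"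

text \<open>ES binders are pairwise distinct, and no binder name occurs free in a position outside
  its scope (the ES itself or any ES to its right).  Every program is alpha-equivalent to one
  satisfying this.\<close>
definition well_named :: "prog \<Rightarrow> bool" where
  "well_named p \<longleftrightarrow> distinct (map fst (snd p)) \<and>
     (\<forall>i j. i \<le> j \<and> j < length (snd p) \<longrightarrow> fst (snd p ! i) \<notin> fv (snd (snd p ! j)))"

end

theory Submission
  imports Defs
begin


lemma nvE_append: "nvE S (E1 @ E2) = nvE (nvE S E1) E2"
  by (induction E1 arbitrary: S) auto

lemma nvE_snoc: "nvE S (E @ [(x,u)]) = (if x \<notin> nvE S E then nvE S E else (nvE S E - {x}) \<union> nv_t u)"
  by (simp add: nvE_append)

lemma nvE_surv: "x \<in> S \<Longrightarrow> x \<notin> fst ` set E \<Longrightarrow> x \<in> nvE S E"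
  by (induction E arbitrary: S) auto

lemma nvE_sub: "nvE S E \<subseteq> S \<union> (\<Union>p\<in>set E. nv_t (snd p))"
proof (induction E arbitrary: S)
  case Nil then show ?case by simp
next
  case (Cons a E)
  obtain y u where a: "a = (y,u)" by (cases a)
  show ?case using Cons.IH[of "if y \<notin> S then S else (S - {y}) \<union> nv_t u"] a by auto
qed

lemma nv_cplug_var: "x \<in> nv_t (cplug C (Var x))"
  by (induction C) auto

lemma fv_cplug_var: "x \<in> fv (cplug C (Var x))"
  by (induction C) auto

lemma nv_cplug_sub: "nv_c H \<subseteq> nv_t (cplug H s)"
  by (induction H) auto

lemma not_value_cplug_app: "\<not> is_value (cplug C (App a b))"
  by (cases C) auto

lemma value_not_inert: "is_value v \<Longrightarrow> \<not> inert_t v"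
  by (cases v) (auto elim: inert_t.cases)

lemma isH_not_inert_redex: "isH H \<Longrightarrow> \<not> inert_t (cplug H (App (Lam x b) a))"
proof (induction rule: isH.induct)
  case 1 then show ?case by (auto elim: inert_t.cases)
next
  case (2 H t) then show ?case by (auto elim: inert_t.cases)
next
  case (3 i H) then show ?case using not_value_cplug_app
    by (auto elim!: inert_t.cases[of "App _ _"])
qed


section \<open>Needed lists\<close>

fun nvlT :: "trm \<Rightarrow> nat list" where
  "nvlT (Var x) = [x]"
| "nvlT (Lam x t) = []"
| "nvlT (App t u) = (if inert_t t then nvlT t @ nvlT u else nvlT t)"

lemma value_nv: "is_value v \<Longrightarrow> nv_t v = {} \<and> nvlT v = []"
  by (cases v) auto

lemma nvlT_inert: "inert_t t \<Longrightarrow> set (nvlT t) = nv_t t"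
  by (induction rule: inert_t.induct) (auto dest: value_nv)

lemma nvlT_sub: "set (nvlT t) \<subseteq> nv_t t"
  by (induction t) auto

definition nstep :: "nat list \<Rightarrow> nat \<Rightarrow> trm \<Rightarrow> nat list" where
  "nstep L y u = (if y \<in> set L then (if inert_t u then concat (map (\<lambda>z. if z = y then nvlT u else [z]) L)
      else takeWhile (\<lambda>z. z \<noteq> y) L @ nvlT u) else L)"

fun nvlE :: "nat list \<Rightarrow> env \<Rightarrow> nat list" where
  "nvlE L [] = L"
| "nvlE L ((y,u) # E) = nvlE (nstep L y u) E"

lemma nvlE_snoc: "nvlE L (E @ [(y,u)]) = nstep (nvlE L E) y u"
  by (induction L E rule: nvlE.induct) auto

lemma term_ctx:
  "x \<in> set (nvlT t) \<Longrightarrow> \<exists>H. isH H \<and> cplug H (Var x) = t \<and> nv_c H = set (takeWhile (\<lambda>z. z \<noteq> x) (nvlT t))"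
proof (induction t)
  case (Var y)
  then show ?case by (intro exI[of _ Hole]) (auto intro: isH.intros)
next
  case (Lam y t)
  then show ?case by simp
next
  case (App t1 t2)
  show ?case
  proof (cases "x \<in> set (nvlT t1)")
    case True
    then obtain H where H: "isH H" "cplug H (Var x) = t1" "nv_c H = set (takeWhile (\<lambda>z. z \<noteq> x) (nvlT t1))"
      using App.IH(1) by blast
    show ?thesis using H True
      by (intro exI[of _ "CAppL H t2"]) (auto intro: isH.intros simp: takeWhile_append1)
  next
    case False
    with App.prems have i: "inert_t t1" and x: "x \<in> set (nvlT t2)" by (auto split: if_splits)
    then obtain H where H: "isH H" "cplug H (Var x) = t2" "nv_c H = set (takeWhile (\<lambda>z. z \<noteq> x) (nvlT t2))"
      using App.IH(2) by blast
    have tw: "takeWhile (\<lambda>z. z \<noteq> x) (nvlT (App t1 t2)) = nvlT t1 @ takeWhile (\<lambda>z. z \<noteq> x) (nvlT t2)"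
      using False i by (auto intro!: takeWhile_append2)
    show ?thesis using H i nvlT_inert[OF i] unfolding tw
      by (intro exI[of _ "CAppR t1 H"]) (auto intro: isH.intros)
  qed
qed




lemma pplug_app: "pplug (pctx_app P y u) (s, []) = (fst (pplug P (s,[])), snd (pplug P (s,[])) @ [(y,u)])"
  by (cases P) auto

lemma pdom_plug: "pdom P = fst ` set (snd (pplug P (s, [])))"
  by (cases P) auto

lemma cm_id: "y \<notin> set T \<Longrightarrow> concat (map (\<lambda>z. if z = y then U else [z]) T) = T"
  by (induction T) auto

lemma cm_set: "y \<in> set T \<Longrightarrow> set (concat (map (\<lambda>z. if z = y then U else [z]) T)) = (set T - {y}) \<union> set U"
  by (induction T) auto

lemma split_tw: "x \<in> set L \<Longrightarrow> \<exists>R. L = takeWhile (\<lambda>z. z \<noteq> x) L @ x # R"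
proof (induction L)
  case Nil then show ?case by simp
next
  case (Cons a L) then show ?case by (cases "a = x") auto
qed

lemma tw_notin: "x \<notin> set (takeWhile (\<lambda>z. z \<noteq> x) L)"
  by (blast dest: set_takeWhileD)

lemma tw_app2: "x \<notin> set A \<Longrightarrow> takeWhile (\<lambda>z. z \<noteq> x) (A @ B) = A @ takeWhile (\<lambda>z. z \<noteq> x) B"
  by (induction A) auto

lemma tw_app1: "x \<in> set A \<Longrightarrow> takeWhile (\<lambda>z. z \<noteq> x) (A @ B) = takeWhile (\<lambda>z. z \<noteq> x) A"
  by (induction A) auto

lemma K:
  assumes "distinct (map fst E)" "x \<notin> fst ` set E" "x \<in> set (nvlE (nvlT t) E)"
  shows "\<exists>P. evctx P (set (takeWhile (\<lambda>z. z \<noteq> x) (nvlE (nvlT t) E))) \<and> pplug P (Var x, []) = (t, E)"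
  using assms
proof (induction E arbitrary: x rule: rev_induct)
  case Nil
  then obtain H where H: "isH H" "cplug H (Var x) = t" "nv_c H = set (takeWhile (\<lambda>z. z \<noteq> x) (nvlT t))"
    using term_ctx[of x t] Nil.prems by auto
  have "evctx (PCtx H []) (nv_c H)" using H(1) by (rule evctx.intros(1))
  then show ?case using H by (intro exI[of _ "PCtx H []"]) auto
next
  case (snoc a E)
  obtain y u where a: "a = (y,u)" by (cases a)
  define L where "L = nvlE (nvlT t) E"
  have L': "nvlE (nvlT t) (E @ [a]) = nstep L y u" unfolding L_def a nvlE_snoc ..
  have dE: "distinct (map fst E)" and yE: "y \<notin> fst ` set E" using snoc.prems(1) a by auto
  have xy: "x \<noteq> y" and xE: "x \<notin> fst ` set E" using snoc.prems(2) a by auto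
  have IH: "\<And>z. z \<notin> fst ` set E \<Longrightarrow> z \<in> set L \<Longrightarrow> \<exists>P. evctx P (set (takeWhile (\<lambda>w. w \<noteq> z) L)) \<and> pplug P (Var z, []) = (t, E)"
    using snoc.IH[OF dE] unfolding L_def by blast
  have xL': "x \<in> set (nstep L y u)" using snoc.prems(3) L' by simp
  let ?T = "takeWhile (\<lambda>z. z \<noteq> x) L"
  let ?T1 = "takeWhile (\<lambda>z. z \<noteq> y) L"
  have r3: "\<exists>P. evctx P (set ?T) \<and> pplug P (Var x, []) = (t, E @ [a])" if h1: "x \<in> set L" and h2: "y \<notin> set ?T"
  proof -
    obtain P where P: "evctx P (set ?T)" "pplug P (Var x, []) = (t, E)" using IH[OF xE h1] by blast
    show ?thesis using evctx.intros(3)[OF P(1) h2, of u] P(2) a by (auto simp: pplug_app)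
  qed
  have r4: "\<exists>P. evctx P (set ?T1 \<union> set (takeWhile (\<lambda>z. z \<noteq> x) (nvlT u))) \<and> pplug P (Var x, []) = (t, E @ [a])"
    if h1: "y \<in> set L" and h2: "x \<in> set (nvlT u)"
  proof -
    obtain P where P: "evctx P (set ?T1)" "pplug P (Var y, []) = (t, E)" using IH[OF yE h1] by blast
    obtain H where H: "isH H" "cplug H (Var x) = u" "nv_c H = set (takeWhile (\<lambda>z. z \<noteq> x) (nvlT u))"
      using term_ctx[OF h2] by blast
    have "y \<notin> set ?T1" by (rule tw_notin)
    moreover have "y \<notin> pdom P" using pdom_plug[of P "Var y"] P(2) yE by simp
    ultimately have "evctx (PEnv t E y H []) (set ?T1 \<union> nv_c H)"
      using evctx.intros(4)[OF P(1) _ _ H(1) P(2)] by blast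
    then show ?thesis using H a by (intro exI[of _ "PEnv t E y H []"]) auto
  qed
  show ?case
  proof (cases "y \<in> set L")
    case False
    then have "nstep L y u = L" by (simp add: nstep_def)
    moreover have "y \<notin> set ?T" using False by (blast dest: set_takeWhileD)
    ultimately show ?thesis using r3 xL' L' by simp
  next
    case yL: True
    obtain R1 where LR1: "L = ?T1 @ y # R1"
      using split_tw[OF yL] by blast
    have yT1: "y \<notin> set ?T1" by (rule tw_notin)
    show ?thesis
    proof (cases "inert_t u")
      case ui: True
      let ?f = "\<lambda>z. if z = y then nvlT u else [z]"
      have L'eq: "nstep L y u = concat (map ?f L)" using yL ui by (simp add: nstep_def)
      have cmL1: "concat (map ?f L) = ?T1 @ nvlT u @ concat (map ?f R1)"
      proof -
        have "concat (map ?f (?T1 @ y # R1)) = ?T1 @ nvlT u @ concat (map ?f R1)"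
          using yT1 by (simp add: cm_id)
        then show ?thesis using LR1 by simp
      qed
      show ?thesis
      proof (cases "x \<in> set L")
        case xL: True
        obtain R where R: "L = ?T @ x # R" using split_tw[OF xL] by blast
        have xT: "x \<notin> set ?T" by (rule tw_notin)
        have cmL: "concat (map ?f L) = concat (map ?f ?T) @ x # concat (map ?f R)"
        proof -
          have "concat (map ?f (?T @ x # R)) = concat (map ?f ?T) @ x # concat (map ?f R)"
            using xy by simp
          then show ?thesis using R by simp
        qed
        show ?thesis
        proof (cases "y \<in> set ?T")
          case False
          have "concat (map ?f ?T) = ?T" using False by (rule cm_id)
          then have "takeWhile (\<lambda>z. z \<noteq> x) (nstep L y u) = ?T"
            using xT L'eq cmL by (simp add: tw_app2)
          then show ?thesis using r3 xL False L' by simp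
        next
          case yT: True
          show ?thesis
          proof (cases "x \<in> set (nvlT u)")
            case False
            have "x \<notin> set (concat (map ?f ?T))" using cm_set[OF yT, of "nvlT u"] xT False by auto
            then have "takeWhile (\<lambda>z. z \<noteq> x) (nstep L y u) = concat (map ?f ?T)"
              using L'eq cmL tw_app2[of x "concat (map ?f ?T)" "x # concat (map ?f R)"] by simp
            moreover have "set (concat (map ?f ?T)) = (set ?T - {y}) \<union> nv_t u"
              using cm_set[OF yT, of "nvlT u"] nvlT_inert[OF ui] by simp
            moreover obtain P where P: "evctx P (set ?T)" "pplug P (Var x, []) = (t, E)"
              using IH[OF xE xL] by blast
            ultimately show ?thesis using evctx.intros(2)[OF P(1) yT ui] a L' P(2)
              by (intro exI[of _ "pctx_app P y u"]) (simp add: pplug_app)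
          next
            case xu: True
            have xT1: "x \<notin> set ?T1"
            proof
              assume xT1: "x \<in> set ?T1"
              have "?T = takeWhile (\<lambda>z. z \<noteq> x) ?T1"
                using xT1 LR1 tw_app1[OF xT1, of "y # R1"] by simp
              then have "set ?T \<subseteq> set ?T1" by (metis (no_types) set_takeWhileD subsetI)
              then show False using yT yT1 by blast
            qed
            have "takeWhile (\<lambda>z. z \<noteq> x) (nstep L y u) = ?T1 @ takeWhile (\<lambda>z. z \<noteq> x) (nvlT u)"
              using L'eq cmL1 xT1 xu by (simp add: tw_app2 tw_app1)
            then show ?thesis using r4[OF yL xu] L' by simp
          qed
        qed
      next
        case xL: False
        have xu: "x \<in> set (nvlT u)"
        proof (rule ccontr)
          assume "x \<notin> set (nvlT u)"
          then have "x \<in> set L" using xL' L'eq cm_set[OF yL, of "nvlT u"] by auto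
          then show False using xL by blast
        qed
        have xT1: "x \<notin> set ?T1" using xL by (blast dest: set_takeWhileD)
        have "takeWhile (\<lambda>z. z \<noteq> x) (nstep L y u) = ?T1 @ takeWhile (\<lambda>z. z \<noteq> x) (nvlT u)"
          using L'eq cmL1 xT1 xu by (simp add: tw_app2 tw_app1)
        then show ?thesis using r4[OF yL xu] L' by simp
      qed
    next
      case un: False
      have L'eq: "nstep L y u = ?T1 @ nvlT u" using yL un by (simp add: nstep_def)
      show ?thesis
      proof (cases "x \<in> set ?T1")
        case True
        have tT: "?T = takeWhile (\<lambda>z. z \<noteq> x) ?T1"
          using True by (subst LR1) (simp add: tw_app1)
        have "takeWhile (\<lambda>z. z \<noteq> x) (nstep L y u) = takeWhile (\<lambda>z. z \<noteq> x) ?T1"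
          using True L'eq by (simp add: tw_app1)
        moreover have "y \<notin> set ?T"
        proof
          assume "y \<in> set ?T"
          then have "y \<in> set (takeWhile (\<lambda>z. z \<noteq> x) ?T1)" using tT by simp
          then show False using yT1 by (blast dest: set_takeWhileD)
        qed
        moreover have "x \<in> set L" using True by (blast dest: set_takeWhileD)
        ultimately show ?thesis using r3 L' tT by simp
      next
        case False
        then have xu: "x \<in> set (nvlT u)" using xL' L'eq by auto
        have "takeWhile (\<lambda>z. z \<noteq> x) (nstep L y u) = ?T1 @ takeWhile (\<lambda>z. z \<noteq> x) (nvlT u)"
          using L'eq False by (simp add: tw_app2)
        then show ?thesis using r4[OF yL xu] L' by simp
      qed
    qed
  qed
qed




lemma abs_value: "abs_p p \<Longrightarrow> is_value (fst p)"
  by (induction rule: abs_p.induct) (auto simp: prog_app_def)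

lemma nonval_cplug: "\<not> is_value s \<Longrightarrow> \<not> is_value (cplug C s)"
  by (cases C) auto

lemma evctx_nonval: "evctx P V \<Longrightarrow> \<not> is_value s \<Longrightarrow> \<not> is_value (fst (pplug P (s,[])))"
proof (induction P V arbitrary: s rule: evctx.induct)
  case (1 H) then show ?case by (simp add: nonval_cplug)
next
  case (2 P V x i) then show ?case by (simp add: pplug_app)
next
  case (3 P V x t) then show ?case by (simp add: pplug_app)
next
  case (4 P V x H u E)
  have "\<not> is_value (fst (pplug P (Var x, [])))" using "4.IH"[of "Var x"] by simp
  then show ?case using 4 by simp
qed

lemma snoc_split: "E @ [a] = E1 @ b # E2 \<Longrightarrow> (E2 = [] \<and> E1 = E \<and> b = a) \<or> (\<exists>E2'. E2 = E2' @ [a] \<and> E = E1 @ b # E2')"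
  by (cases E2 rule: rev_cases) auto

lemma inert_char: "inert_p p \<Longrightarrow> inert_t (fst p) \<and>
   (\<forall>E1 y u E2. snd p = E1 @ (y,u) # E2 \<longrightarrow> y \<in> nvE (nv_t (fst p)) E1 \<longrightarrow> inert_t u)"
proof (induction rule: inert_p.induct)
  case (1 i) then show ?case by simp
next
  case (2 p x i)
  show ?case
  proof (intro conjI allI impI)
    show "inert_t (fst (prog_app p x i))" using 2 by (simp add: prog_app_def)
    fix E1 y u E2
    assume a: "snd (prog_app p x i) = E1 @ (y, u) # E2" and b: "y \<in> nvE (nv_t (fst (prog_app p x i))) E1"
    from a have "snd p @ [(x,i)] = E1 @ (y, u) # E2" by (simp add: prog_app_def)
    from snoc_split[OF this] show "inert_t u"
      using 2 b by (auto simp: prog_app_def)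
  qed
next
  case (3 p x t)
  show ?case
  proof (intro conjI allI impI)
    show "inert_t (fst (prog_app p x t))" using 3 by (simp add: prog_app_def)
    fix E1 y u E2
    assume a: "snd (prog_app p x t) = E1 @ (y, u) # E2" and b: "y \<in> nvE (nv_t (fst (prog_app p x t))) E1"
    from a have "snd p @ [(x,t)] = E1 @ (y, u) # E2" by (simp add: prog_app_def)
    from snoc_split[OF this] show "inert_t u"
      using 3 b by (auto simp: prog_app_def nvp_def)
  qed
qed

lemma pdom_app: "pdom (pctx_app P y u) = pdom P \<union> {y}"
  by (cases P) auto

lemma survival: "evctx P V \<Longrightarrow> x \<notin> pdom P \<Longrightarrow> x \<in> nvp (pplug P (Var x, []))"
proof (induction P V arbitrary: x rule: evctx.induct)
  case (1 H) then show ?case by (simp add: nvp_def nv_cplug_var)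
next
  case (2 P V y i) then show ?case by (auto simp: pplug_app nvp_def nvE_snoc pdom_app)
next
  case (3 P V y t) then show ?case by (auto simp: pplug_app nvp_def nvE_snoc pdom_app)
next
  case (4 P V y H u E)
  have "y \<in> nvE (nv_t u) E" using "4.IH"[of y] 4 by (simp add: nvp_def)
  moreover have "x \<noteq> y" "x \<notin> fst ` set E" using 4 pdom_plug[of P "Var y"] by auto
  ultimately show ?case by (auto simp: nvp_def nvE_append nv_cplug_var)
qed

lemma evctx_struct: "evctx P V \<Longrightarrow> (\<forall>C E. P = PCtx C E \<longrightarrow> isH C) \<and>
   (\<forall>u E1 x C E2. P = PEnv u E1 x C E2 \<longrightarrow> isH C \<and> x \<in> nvE (nv_t u) E1)"
proof (induction P V rule: evctx.induct)
  case (1 H) then show ?case by simp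
next
  case (2 Q W y i) show ?case using "2.IH" by (cases Q) simp_all
next
  case (3 Q W y t) show ?case using "3.IH" by (cases Q) simp_all
next
  case (4 P V x H u E)
  have "x \<in> nvp (u, E)" using survival[OF 4(1) 4(3)] 4(5) by simp
  then show ?case using 4(4) by (simp add: nvp_def)
qed

lemma om_not_onorm:
  assumes P: "evctx P V" and p: "p = pplug P (App (Lam x t) u, [])"
  shows "\<not> onorm p"
proof
  assume "onorm p"
  then show False unfolding onorm_def
  proof
    assume "abs_p p"
    then have "is_value (fst p)" by (rule abs_value)
    moreover have "\<not> is_value (fst p)" using evctx_nonval[OF P, of "App (Lam x t) u"] p by simp
    ultimately show False by simp
  next
    assume ip: "inert_p p"
    note ic = inert_char[OF ip]
    note st = evctx_struct[OF P]
    show False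
    proof (cases P)
      case (PCtx C E)
      then have "isH C" using st by simp
      then show False using ic p PCtx isH_not_inert_redex by simp
    next
      case (PEnv u0 E1 y C E2)
      then have "isH C" "y \<in> nvE (nv_t u0) E1" using st by auto
      moreover have "snd p = E1 @ (y, cplug C (App (Lam x t) u)) # E2" "fst p = u0" using p PEnv by auto
      ultimately show False using ic isH_not_inert_redex by blast
    qed
  qed
qed

lemma oe_not_onorm:
  assumes P: "evctx P V" and p: "p = pplug P (Var x, [])" and xv: "(x, v) \<in> set (pes P)"
    and v: "is_value v" and wn: "well_named p"
  shows "\<not> onorm p"
proof
  assume "onorm p"
  then show False unfolding onorm_def
  proof
    assume "abs_p p"
    then have "is_value (fst p)" by (rule abs_value)
    moreover have "\<not> is_value (fst p)" using evctx_nonval[OF P, of "Var x"] p by simp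
    ultimately show False by simp
  next
    assume ip: "inert_p p"
    note ic = inert_char[OF ip]
    note st = evctx_struct[OF P]
    have dist: "distinct (map fst (snd p))" and fvc: "\<And>i j. i \<le> j \<Longrightarrow> j < length (snd p) \<Longrightarrow> fst (snd p ! i) \<notin> fv (snd (snd p ! j))"
      using wn unfolding well_named_def by auto
    have vni: "\<not> inert_t v" using v by (rule value_not_inert)
    show False
    proof (cases P)
      case (PCtx C E)
      then have sp: "snd p = E" "fst p = cplug C (Var x)" using p by auto
      obtain E1 E2 where E: "E = E1 @ (x,v) # E2" using xv PCtx by (auto simp: in_set_conv_decomp)
      have "x \<notin> fst ` set E1" using dist sp E by auto
      then have "x \<in> nvE (nv_t (fst p)) E1" using sp nvE_surv nv_cplug_var by metis
      then show False using ic sp E vni by blast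
    next
      case (PEnv u0 E1 y C E2)
      then have yn: "y \<in> nvE (nv_t u0) E1" using st by auto
      have sp: "snd p = E1 @ (y, cplug C (Var x)) # E2" "fst p = u0" using p PEnv by auto
      have "(x,v) \<in> set E1 \<or> (x,v) \<in> set E2" using xv PEnv by auto
      then show False
      proof
        assume "(x,v) \<in> set E1"
        then obtain A B where A: "E1 = A @ (x,v) # B" by (auto simp: in_set_conv_decomp)
        have "fst (snd p ! length A) \<notin> fv (snd (snd p ! length E1))"
          by (rule fvc) (auto simp: sp A)
        moreover have "snd p ! length A = (x,v)" by (simp add: sp A nth_append)
        moreover have "snd p ! length E1 = (y, cplug C (Var x))" by (simp add: sp nth_append)
        ultimately show False using fv_cplug_var by simp
      next
        assume "(x,v) \<in> set E2"
        then obtain A B where A: "E2 = A @ (x,v) # B" by (auto simp: in_set_conv_decomp)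
        have sp2: "snd p = (E1 @ (y, cplug C (Var x)) # A) @ (x,v) # B" using sp A by simp
        have "x \<notin> fst ` set A" using dist sp2 by auto
        moreover have "x \<in> nvE (nvE (nv_t u0) E1) [(y, cplug C (Var x))]" using yn nv_cplug_var by simp
        ultimately have "x \<in> nvE (nv_t u0) (E1 @ (y, cplug C (Var x)) # A)"
          using nvE_surv by (simp add: nvE_append)
        then show False using ic sp2 sp vni by blast
      qed
    qed
  qed
qed

lemma onorm_nostep: "well_named p \<Longrightarrow> onorm p \<Longrightarrow> \<not> step_ond p q"
  unfolding step_ond_def step_om_def step_oe_def
  using om_not_onorm oe_not_onorm by blast




lemma decomp: "is_value t \<or> inert_t t \<or> (\<exists>H x b a. isH H \<and> t = cplug H (App (Lam x b) a))"
proof (induction t)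
  case (Var x) then show ?case by (auto intro: inert_t.intros)
next
  case (Lam x t) then show ?case by simp
next
  case (App t1 t2)
  show ?case
  proof (cases "is_value t1")
    case True
    then obtain x b where "t1 = Lam x b" by (cases t1) auto
    then show ?thesis by (intro disjI2 exI[of _ Hole]) (auto intro: isH.intros)
  next
    case nv: False
    show ?thesis
    proof (cases "inert_t t1")
      case i1: True
      from App.IH(2) show ?thesis
      proof (elim disjE exE conjE)
        assume "is_value t2" then show ?thesis using i1 by (auto intro: inert_t.intros)
      next
        assume "inert_t t2" then show ?thesis using i1 by (auto intro: inert_t.intros)
      next
        fix H x b a assume "isH H" "t2 = cplug H (App (Lam x b) a)"
        then show ?thesis using i1 by (intro disjI2 exI[of _ "CAppR t1 H"]) (auto intro: isH.intros)
      qed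
    next
      case ni1: False
      then obtain H x b a where "isH H" "t1 = cplug H (App (Lam x b) a)" using App.IH(1) nv by blast
      then show ?thesis by (intro disjI2 exI[of _ "CAppL H t2"]) (auto intro: isH.intros)
    qed
  qed
qed

fun allv :: "trm \<Rightarrow> nat set" where
  "allv (Var x) = {x}"
| "allv (Lam x t) = allv t"
| "allv (App t u) = allv t \<union> allv u"

lemma finite_allv: "finite (allv t)"
  by (induction t) auto

lemma nv_allv: "nv_t t \<subseteq> allv t"
  by (induction t) auto

fun repl :: "(nat \<Rightarrow> trm) \<Rightarrow> trm \<Rightarrow> trm" where
  "repl \<rho> (Var x) = \<rho> x"
| "repl \<rho> (Lam x t) = Lam x (repl \<rho> t)"
| "repl \<rho> (App t u) = App (repl \<rho> t) (repl \<rho> u)"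

fun replC :: "(nat \<Rightarrow> trm) \<Rightarrow> ctx \<Rightarrow> ctx" where
  "replC \<rho> Hole = Hole"
| "replC \<rho> (CAppL C t) = CAppL (replC \<rho> C) (repl \<rho> t)"
| "replC \<rho> (CAppR t C) = CAppR (repl \<rho> t) (replC \<rho> C)"

definition replE :: "(nat \<Rightarrow> trm) \<Rightarrow> env \<Rightarrow> env" where
  "replE \<rho> E = map (\<lambda>(y,u). (y, repl \<rho> u)) E"

fun replP :: "(nat \<Rightarrow> trm) \<Rightarrow> pctx \<Rightarrow> pctx" where
  "replP \<rho> (PCtx C E) = PCtx (replC \<rho> C) (replE \<rho> E)"
| "replP \<rho> (PEnv u E1 x C E2) = PEnv (repl \<rho> u) (replE \<rho> E1) x (replC \<rho> C) (replE \<rho> E2)"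

lemma repl_id: "(\<forall>x\<in>allv t. \<rho> x = Var x) \<Longrightarrow> repl \<rho> t = t"
  by (induction t) auto

lemma cplug_repl: "repl \<rho> (cplug C s) = cplug (replC \<rho> C) (repl \<rho> s)"
  by (induction C) auto

lemma nv_repl: "(\<forall>x\<in>nv_t t. \<rho> x = Var x) \<Longrightarrow> nv_t (repl \<rho> t) = nv_t t"
  by (induction t) auto

lemma value_repl: "is_value v \<Longrightarrow> is_value (repl \<rho> v)"
  by (cases v) auto

lemma inert_repl: "inert_t i \<Longrightarrow> (\<forall>x\<in>nv_t i. \<rho> x = Var x) \<Longrightarrow> inert_t (repl \<rho> i)"
proof (induction rule: inert_t.induct)
  case (1 x) then show ?case by (auto intro: inert_t.intros)
next
  case (2 i f) then show ?case by (auto intro: inert_t.intros value_repl)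
qed

lemma isH_repl: "isH H \<Longrightarrow> (\<forall>x\<in>nv_c H. \<rho> x = Var x) \<Longrightarrow> isH (replC \<rho> H) \<and> nv_c (replC \<rho> H) = nv_c H"
proof (induction rule: isH.induct)
  case 1 then show ?case by (auto intro: isH.intros)
next
  case (2 H t) then show ?case by (auto intro: isH.intros)
next
  case (3 i H) then show ?case by (auto intro: isH.intros inert_repl simp: nv_repl)
qed

lemma replE_app: "replE \<rho> (E1 @ E2) = replE \<rho> E1 @ replE \<rho> E2"
  by (simp add: replE_def)

lemma pplug_repl: "pplug (replP \<rho> P) (repl \<rho> s, []) = (repl \<rho> (fst (pplug P (s,[]))), replE \<rho> (snd (pplug P (s,[]))))"
  by (cases P) (auto simp: cplug_repl replE_def)

lemma pctx_app_repl: "replP \<rho> (pctx_app P y t) = pctx_app (replP \<rho> P) y (repl \<rho> t)"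
  by (cases P) (auto simp: replE_def)

lemma pdom_repl: "pdom (replP \<rho> P) = pdom P"
  by (cases P) (auto simp: replE_def image_image split_def)

lemma evctx_repl: "evctx P V \<Longrightarrow> (\<forall>x\<in>V. \<rho> x = Var x) \<Longrightarrow> (\<forall>x\<in>pdom P. \<rho> x = Var x) \<Longrightarrow> evctx (replP \<rho> P) V"
proof (induction P V rule: evctx.induct)
  case (1 H)
  then have "isH (replC \<rho> H) \<and> nv_c (replC \<rho> H) = nv_c H" using isH_repl by blast
  then show ?case using evctx.intros(1)[of "replC \<rho> H"] by (simp add: replE_def)
next
  case (2 P V x i)
  have ev: "evctx (replP \<rho> P) V" using 2 by (intro "2.IH") (auto simp: pdom_app)
  have "inert_t (repl \<rho> i)" "nv_t (repl \<rho> i) = nv_t i" using 2 inert_repl nv_repl by auto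
  then show ?case using evctx.intros(2)[OF ev \<open>x \<in> V\<close>, of "repl \<rho> i"] by (simp add: pctx_app_repl)
next
  case (3 P V x t)
  have ev: "evctx (replP \<rho> P) V" using 3 by (intro "3.IH") (auto simp: pdom_app)
  then show ?case using evctx.intros(3)[OF ev \<open>x \<notin> V\<close>, of "repl \<rho> t"] by (simp add: pctx_app_repl)
next
  case (4 P V x H u E)
  have pd: "pdom P = fst ` set E" using pdom_plug[of P "Var x"] 4 by simp
  have ev: "evctx (replP \<rho> P) V" using 4 pd by (intro "4.IH") auto
  have hr: "isH (replC \<rho> H) \<and> nv_c (replC \<rho> H) = nv_c H" using 4 isH_repl by blast
  have rx: "\<rho> x = Var x" using 4 by simp
  have pl: "pplug (replP \<rho> P) (Var x, []) = (repl \<rho> u, replE \<rho> E)"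
    using pplug_repl[of \<rho> P "Var x"] rx 4 by simp
  have "evctx (PEnv (repl \<rho> u) (replE \<rho> E) x (replC \<rho> H) []) (V \<union> nv_c (replC \<rho> H))"
    using evctx.intros(4)[OF ev \<open>x \<notin> V\<close> _ _ pl] hr 4 pdom_repl by metis
  then show ?case using hr by (simp add: replE_def)
qed

fun pext :: "pctx \<Rightarrow> env \<Rightarrow> pctx" where
  "pext P [] = P"
| "pext P ((y,s) # E) = pext (pctx_app P y s) E"

lemma pext_snoc: "pext P (E @ [(y,s)]) = pctx_app (pext P E) y s"
  by (induction P E rule: pext.induct) auto

lemma pext_plug: "pplug (pext P E) (s, []) = (fst (pplug P (s,[])), snd (pplug P (s,[])) @ E)"
  by (induction P E rule: pext.induct) (auto simp: pplug_app)

lemma pes_app: "pes (pctx_app P y s) = pes P @ [(y,s)]"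
  by (cases P) auto

lemma pes_pext: "pes (pext P E) = pes P @ E"
  by (induction P E rule: pext.induct) (auto simp: pes_app)

lemma env_hole_inv: "evctx Q V \<Longrightarrow> Q = PEnv u E1 x Hole E2 \<Longrightarrow>
   \<exists>P'. evctx (pext (pctx_app P' x v) E2) V \<and> pplug P' (Var x, []) = (u, E1)"
proof (induction Q V arbitrary: E2 rule: evctx.induct)
  case (1 H) then show ?case by simp
next
  case (2 P V y i)
  obtain E2' where P: "P = PEnv u E1 x Hole E2'" and E2: "E2 = E2' @ [(y,i)]"
    by (cases P) (use "2.prems" in auto)
  obtain P' where P': "evctx (pext (pctx_app P' x v) E2') V" "pplug P' (Var x, []) = (u, E1)"
    using "2.IH"[OF P] by blast
  show ?case using evctx.intros(2)[OF P'(1) \<open>y \<in> V\<close> \<open>inert_t i\<close>] P'(2) E2 by (auto simp: pext_snoc)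
next
  case (3 P V y t)
  obtain E2' where P: "P = PEnv u E1 x Hole E2'" and E2: "E2 = E2' @ [(y,t)]"
    by (cases P) (use "3.prems" in auto)
  obtain P' where P': "evctx (pext (pctx_app P' x v) E2') V" "pplug P' (Var x, []) = (u, E1)"
    using "3.IH"[OF P] by blast
  show ?case using evctx.intros(3)[OF P'(1) \<open>y \<notin> V\<close>] P'(2) E2 by (auto simp: pext_snoc)
next
  case (4 P V x' H u' E)
  then have eqs: "u' = u" "E = E1" "x' = x" "H = Hole" "E2 = []" by auto
  have "evctx (pctx_app P x v) V" using evctx.intros(3)[OF 4(1) \<open>x' \<notin> V\<close>] eqs by simp
  then show ?case using 4 eqs by (intro exI[of _ P]) simp
qed




lemma value_abs: "is_value t \<Longrightarrow> abs_p (t, E)"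
proof (induction E rule: rev_induct)
  case Nil then show ?case by (rule abs_p.intros(1))
next
  case (snoc a E)
  obtain y u where a: "a = (y,u)" by (cases a)
  have "abs_p (prog_app (t,E) y u)" using snoc by (intro abs_p.intros(2)) simp
  then show ?case by (simp add: prog_app_def a)
qed

definition dec :: "trm \<Rightarrow> ctx \<times> trm" where
  "dec u = (SOME hr. isH (fst hr) \<and> u = cplug (fst hr) (snd hr) \<and> (\<exists>x b a. snd hr = App (Lam x b) a))"

lemma dec_ok: "\<not> is_value u \<Longrightarrow> \<not> inert_t u \<Longrightarrow>
   isH (fst (dec u)) \<and> u = cplug (fst (dec u)) (snd (dec u)) \<and> (\<exists>x b a. snd (dec u) = App (Lam x b) a)"
proof -
  assume "\<not> is_value u" "\<not> inert_t u"
  then obtain H x b a where "isH H" "u = cplug H (App (Lam x b) a)" using decomp by blast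
  then have "\<exists>hr. isH (fst hr) \<and> u = cplug (fst hr) (snd hr) \<and> (\<exists>x b a. snd hr = App (Lam x b) a)"
    by (intro exI[of _ "(H, App (Lam x b) a)"]) auto
  then show ?thesis unfolding dec_def by (rule someI_ex)
qed

definition star :: "nat \<Rightarrow> trm \<Rightarrow> trm" where
  "star g u = (if inert_t u then u else if is_value u then Var g else cplug (fst (dec u)) (Var g))"

definition orig :: "trm \<Rightarrow> trm" where
  "orig u = (if is_value u then u else snd (dec u))"

lemma allv_cplug_var: "allv (cplug C (Var g)) \<subseteq> allv (cplug C s) \<union> {g}"
  by (induction C) auto

lemma allv_cplug_in: "g \<in> allv (cplug C (Var g))"
  by (induction C) auto

lemma allv_star: "x \<in> allv (star g u) \<Longrightarrow> x \<in> allv u \<or> (x = g \<and> \<not> inert_t u)"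
proof -
  assume x: "x \<in> allv (star g u)"
  show ?thesis
  proof (cases "inert_t u")
    case True then show ?thesis using x by (simp add: star_def)
  next
    case ni: False
    show ?thesis
    proof (cases "is_value u")
      case True then show ?thesis using x ni by (simp add: star_def)
    next
      case False
      have "u = cplug (fst (dec u)) (snd (dec u))" using dec_ok[OF False ni] by blast
      then have "allv (cplug (fst (dec u)) (Var g)) \<subseteq> allv u \<union> {g}" using allv_cplug_var by metis
      then show ?thesis using x ni False by (auto simp: star_def)
    qed
  qed
qed

lemma replC_id: "(\<forall>x\<in>allv (cplug C s). \<rho> x = Var x) \<Longrightarrow> replC \<rho> C = C"
  by (induction C) (auto simp: repl_id)

lemma star_repl: "(\<forall>x\<in>allv u. \<rho> x = Var x) \<Longrightarrow> (\<not> inert_t u \<longrightarrow> \<rho> g = orig u) \<Longrightarrow> repl \<rho> (star g u) = u"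
proof -
  assume id: "\<forall>x\<in>allv u. \<rho> x = Var x" and g: "\<not> inert_t u \<longrightarrow> \<rho> g = orig u"
  show ?thesis
  proof (cases "inert_t u")
    case True then show ?thesis using id by (simp add: star_def repl_id)
  next
    case ni: False
    show ?thesis
    proof (cases "is_value u")
      case True then show ?thesis using ni g by (simp add: star_def orig_def)
    next
      case False
      have d: "u = cplug (fst (dec u)) (snd (dec u))" using dec_ok[OF False ni] by blast
      have "replC \<rho> (fst (dec u)) = fst (dec u)" using id d by (metis replC_id)
      then show ?thesis using ni False g d by (simp add: star_def orig_def cplug_repl)
    qed
  qed
qed

lemma isH_nvlT: "isH H \<Longrightarrow> x \<in> set (nvlT (cplug H (Var x)))"
  by (induction rule: isH.induct) auto

lemma star_marker: "\<not> inert_t u \<Longrightarrow> g \<in> set (nvlT (star g u))"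
proof -
  assume ni: "\<not> inert_t u"
  show ?thesis
  proof (cases "is_value u")
    case True then show ?thesis using ni by (simp add: star_def)
  next
    case False then show ?thesis using ni dec_ok[OF False ni] isH_nvlT by (simp add: star_def)
  qed
qed

lemma nstep_marker: "g \<in> set (nvlT s) \<Longrightarrow> y \<in> set L \<Longrightarrow> g \<in> set (nstep L y s)"
  by (auto simp: nstep_def cm_set)

lemma nstep_keep: "m \<in> set L \<Longrightarrow> m \<noteq> y \<Longrightarrow> (\<not> inert_t s \<longrightarrow> (\<exists>m'\<in>set (nvlT s). P m')) \<Longrightarrow> P m \<Longrightarrow>
   \<exists>m'\<in>set (nstep L y s). P m'"
proof -
  assume m: "m \<in> set L" "m \<noteq> y" and c: "\<not> inert_t s \<longrightarrow> (\<exists>m'\<in>set (nvlT s). P m')" and pm: "P m"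
  show ?thesis
  proof (cases "y \<in> set L")
    case False then show ?thesis using m pm by (auto simp: nstep_def)
  next
    case yL: True
    show ?thesis
    proof (cases "inert_t s")
      case True then show ?thesis using m pm yL cm_set[OF yL, of "nvlT s"] by (auto simp: nstep_def)
    next
      case False then show ?thesis using c yL by (auto simp: nstep_def)
    qed
  qed
qed

lemma marker_E: "(\<exists>m\<in>set L. N \<le> m) \<Longrightarrow> (\<forall>(y,s)\<in>set E. y < N \<and> (\<not> inert_t s \<longrightarrow> (\<exists>m\<in>set (nvlT s). N \<le> m)))
   \<Longrightarrow> \<exists>m\<in>set (nvlE L E). N \<le> m"
proof (induction L E rule: nvlE.induct)
  case (1 L) then show ?case by simp
next
  case (2 L y u E)
  obtain m where m: "m \<in> set L" "N \<le> m" using "2.prems" by blast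
  have "y < N" using "2.prems" by auto
  moreover have "\<not> inert_t u \<longrightarrow> (\<exists>m'\<in>set (nvlT u). N \<le> m')" using "2.prems" by auto
  ultimately have "\<exists>m'\<in>set (nstep L y u). N \<le> m'"
    using nstep_keep[of m L y u "\<lambda>z. N \<le> z"] m by auto
  then show ?case using "2.IH" "2.prems" by simp
qed

lemma nstep_sub: "set (nstep L y s) \<subseteq> set L \<union> set (nvlT s)"
  by (auto simp: nstep_def dest: set_takeWhileD)

lemma nvlE_sub: "set (nvlE L E) \<subseteq> set L \<union> (\<Union>e\<in>set E. set (nvlT (snd e)))"
proof (induction L E rule: nvlE.induct)
  case (1 L) then show ?case by simp
next
  case (2 L y u E)
  then show ?case using nstep_sub[of L y u] by auto
qed




definition stE :: "nat \<Rightarrow> env \<Rightarrow> env" where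
  "stE N E = map (\<lambda>(y,u). (y, star (Suc (N + y)) u)) E"

lemma star_inert: "inert_t u \<Longrightarrow> star g u = u"
  by (simp add: star_def)

lemma star_ni: "\<not> inert_t (star g u) \<Longrightarrow> \<not> inert_t u"
  using star_inert by metis

lemma Q:
  assumes "inert_t t" "\<forall>(y,u)\<in>set E. y < N"
    and "\<forall>m\<in>set (nvlE (nvlT t) (stE N E)). m < N"
  shows "inert_p (t,E) \<and> set (nvlE (nvlT t) (stE N E)) = nvp (t,E)"
  using assms(2,3)
proof (induction E rule: rev_induct)
  case Nil
  then show ?case using assms(1) by (simp add: stE_def nvp_def nvlT_inert inert_p.intros(1))
next
  case (snoc a E)
  obtain y u where a: "a = (y,u)" by (cases a)
  define L where "L = nvlE (nvlT t) (stE N E)"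
  let ?g = "Suc (N + y)"
  have L': "nvlE (nvlT t) (stE N (E @ [a])) = nstep L y (star ?g u)"
    by (simp add: L_def stE_def a nvlE_snoc)
  have yN: "y < N" using snoc.prems a by auto
  have all': "\<forall>m\<in>set (nstep L y (star ?g u)). m < N" using snoc.prems L' by simp
  have allL: "\<forall>m\<in>set L. m < N"
  proof (rule ccontr)
    assume "\<not> (\<forall>m\<in>set L. m < N)"
    then obtain m where m: "m \<in> set L" "N \<le> m" by auto
    have c: "\<not> inert_t (star ?g u) \<longrightarrow> (\<exists>m'\<in>set (nvlT (star ?g u)). N \<le> m')"
    proof
      assume "\<not> inert_t (star ?g u)"
      then have "?g \<in> set (nvlT (star ?g u))" using star_marker star_ni by blast
      moreover have "N \<le> ?g" by simp
      ultimately show "\<exists>m'\<in>set (nvlT (star ?g u)). N \<le> m'" by blast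
    qed
    have "\<exists>m'\<in>set (nstep L y (star ?g u)). N \<le> m'"
      using nstep_keep[of m L y "star ?g u" "\<lambda>z. N \<le> z"] m c yN by auto
    then show False using all' by auto
  qed
  have IH: "inert_p (t,E)" "set L = nvp (t,E)"
    using snoc.IH snoc.prems allL unfolding L_def by auto
  show ?case
  proof (cases "y \<in> set L")
    case False
    then have "nstep L y (star ?g u) = L" by (simp add: nstep_def)
    moreover have "inert_p (prog_app (t,E) y u)" using IH False by (intro inert_p.intros(3)) auto
    moreover have "nvp (t, E @ [a]) = nvp (t,E)" using IH False by (simp add: nvp_def a nvE_snoc)
    ultimately show ?thesis using L' IH by (simp add: prog_app_def a)
  next
    case yL: True
    have ui: "inert_t u"
    proof (rule ccontr)
      assume "\<not> inert_t u"
      then have "?g \<in> set (nstep L y (star ?g u))" using star_marker nstep_marker yL by blast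
      then show False using all' by auto
    qed
    then have "nstep L y (star ?g u) = concat (map (\<lambda>z. if z = y then nvlT u else [z]) L)"
      using yL by (simp add: nstep_def star_inert)
    then have "set (nstep L y (star ?g u)) = (set L - {y}) \<union> nv_t u"
      using cm_set[OF yL, of "nvlT u"] nvlT_inert[OF ui] by simp
    moreover have "inert_p (prog_app (t,E) y u)" using IH yL ui by (intro inert_p.intros(2)) auto
    moreover have "nvp (t, E @ [a]) = (nvp (t,E) - {y}) \<union> nv_t u" using IH yL by (simp add: nvp_def a nvE_snoc)
    ultimately show ?thesis using L' IH by (simp add: prog_app_def a)
  qed
qed




lemma step_of_not_onorm:
  assumes wn: "well_named (t,E)" and no: "\<not> onorm (t,E)"
  shows "\<exists>q. step_ond (t,E) q"
proof -
  have dist: "distinct (map fst E)" using wn by (simp add: well_named_def)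
  have tnv: "\<not> is_value t" using no value_abs by (auto simp: onorm_def)
  define M where "M = allv t \<union> (\<Union>e\<in>set E. allv (snd e)) \<union> fst ` set E"
  have finM: "finite M" unfolding M_def by (auto simp: finite_allv)
  define N where "N = Suc (Max M)"
  have ltN: "\<And>x. x \<in> M \<Longrightarrow> x < N" unfolding N_def using Max_ge[OF finM] le_imp_less_Suc by blast
  have tN: "\<And>x. x \<in> allv t \<Longrightarrow> x < N" using ltN unfolding M_def by blast
  have EN: "\<And>y u x. (y,u) \<in> set E \<Longrightarrow> x \<in> allv u \<Longrightarrow> x < N"
  proof -
    fix y u x assume a: "(y,u) \<in> set E" "x \<in> allv u"
    then have "x \<in> (\<Union>e\<in>set E. allv (snd e))" by force
    then show "x < N" using ltN unfolding M_def by blast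
  qed
  have yN: "\<And>y. y \<in> fst ` set E \<Longrightarrow> y < N" using ltN unfolding M_def by blast
  define ts where "ts = star N t"
  define Es where "Es = stE N E"
  define L where "L = nvlE (nvlT ts) Es"
  have fstEs: "map fst Es = map fst E" by (simp add: Es_def stE_def split_def)
  have ex: "\<exists>m\<in>set L. N \<le> m"
  proof (cases "inert_t t")
    case True
    have tsi: "ts = t" using True by (simp add: ts_def star_inert)
    show ?thesis
    proof (rule ccontr)
      assume "\<not> (\<exists>m\<in>set L. N \<le> m)"
      then have "\<forall>m\<in>set (nvlE (nvlT t) (stE N E)). m < N" using tsi by (auto simp: L_def Es_def)
      moreover have "\<forall>(y,u)\<in>set E. y < N" using yN by force
      ultimately have "inert_p (t,E)" using Q[OF True] by blast
      then show False using no by (simp add: onorm_def)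
    qed
  next
    case False
    have "N \<in> set (nvlT ts)" using star_marker[OF False] by (simp add: ts_def)
    moreover have "\<forall>(y,s)\<in>set Es. y < N \<and> (\<not> inert_t s \<longrightarrow> (\<exists>m\<in>set (nvlT s). N \<le> m))"
    proof (clarsimp simp: Es_def stE_def)
      fix y u assume yu: "(y,u) \<in> set E"
      show "y < N \<and> (\<not> inert_t (star (Suc (N + y)) u) \<longrightarrow> (\<exists>m\<in>set (nvlT (star (Suc (N + y)) u)). N \<le> m))"
      proof (intro conjI impI)
        show "y < N" using yN yu by force
        assume "\<not> inert_t (star (Suc (N + y)) u)"
        then have "Suc (N + y) \<in> set (nvlT (star (Suc (N + y)) u))" using star_marker star_ni by blast
        moreover have "N \<le> Suc (N + y)" by simp
        ultimately show "\<exists>m\<in>set (nvlT (star (Suc (N + y)) u)). N \<le> m" by blast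
      qed
    qed
    ultimately show ?thesis using marker_E[of "nvlT ts" N Es] by (auto simp: L_def)
  qed
  from split_list_first_prop[OF ex] obtain ys h zs where L: "L = ys @ h # zs" and hN: "N \<le> h" and ys: "\<forall>z\<in>set ys. \<not> N \<le> z"
    by blast
  have hys: "h \<notin> set ys" using ys hN by blast
  have tw: "takeWhile (\<lambda>z. z \<noteq> h) L = ys" unfolding L using hys by (rule tw_app2[THEN trans]) simp
  have domEs: "fst ` set Es = fst ` set E" using arg_cong[OF fstEs, of set] by simp
  have hdom: "h \<notin> fst ` set Es" using domEs yN hN by (metis leD)
  have distEs: "distinct (map fst Es)" using dist fstEs by simp
  have hL: "h \<in> set (nvlE (nvlT ts) Es)" using L by (simp add: L_def[symmetric])
  obtain Ps where Ps: "evctx Ps (set ys)" "pplug Ps (Var h, []) = (ts, Es)"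
    using K[OF distEs hdom hL] tw unfolding L_def by blast
  have hsrc: "h \<in> allv ts \<or> (\<exists>e\<in>set Es. h \<in> allv (snd e))"
  proof -
    have "h \<in> set (nvlT ts) \<union> (\<Union>e\<in>set Es. set (nvlT (snd e)))" using nvlE_sub hL by blast
    then show ?thesis using nvlT_sub nv_allv by blast
  qed
  define \<rho> where "\<rho> = (\<lambda>g. if g = N then orig t else if N < g \<and> g - Suc N \<in> fst ` set E
      then orig (the (map_of E (g - Suc N))) else Var g)"
  have \<rho>id: "\<And>x. x < N \<Longrightarrow> \<rho> x = Var x" by (simp add: \<rho>_def)
  have \<rho>E: "\<And>y u. (y,u) \<in> set E \<Longrightarrow> \<rho> (Suc (N + y)) = orig u"
  proof -
    fix y u assume yu: "(y,u) \<in> set E"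
    have "map_of E y = Some u" using map_of_is_SomeI[OF dist yu] .
    moreover have "y \<in> fst ` set E" using yu by force
    ultimately show "\<rho> (Suc (N + y)) = orig u" by (simp add: \<rho>_def)
  qed
  have rt: "repl \<rho> ts = t" unfolding ts_def
    by (rule star_repl) (auto simp: \<rho>id tN, simp add: \<rho>_def)
  have rE: "replE \<rho> Es = E"
  proof -
    have "replE \<rho> Es = map (\<lambda>(y,u). (y, repl \<rho> (star (Suc (N + y)) u))) E"
      by (simp add: replE_def Es_def stE_def split_def)
    also have "\<dots> = E"
    proof (rule map_idI)
      fix e assume e: "e \<in> set E"
      obtain y u where yu: "e = (y,u)" by (cases e)
      have "repl \<rho> (star (Suc (N + y)) u) = u"
        using e yu EN \<rho>id \<rho>E by (intro star_repl) auto
      then show "(\<lambda>(y,u). (y, repl \<rho> (star (Suc (N + y)) u))) e = e" using yu by simp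
    qed
    finally show ?thesis .
  qed
  define P where "P = replP \<rho> Ps"
  have pdPs: "pdom Ps = fst ` set E" using pdom_plug[of Ps "Var h"] Ps(2) domEs by simp
  have evP: "evctx P (set ys)" unfolding P_def
    using Ps(1) ys pdPs yN \<rho>id by (intro evctx_repl) auto
  have plugP: "pplug P (\<rho> h, []) = (t, E)"
    using pplug_repl[of \<rho> Ps "Var h"] Ps(2) rt rE by (simp add: P_def)
  have om: "\<exists>q. step_ond (t,E) q" if r: "\<rho> h = App (Lam x b) a" for x b a
  proof -
    have "step_om (t,E) (pplug P (b, [(x,a)]))" unfolding step_om_def
      using evP plugP r by metis
    then show ?thesis unfolding step_ond_def by blast
  qed
  from hsrc show ?thesis
  proof
    assume "h \<in> allv ts"
    then have "h \<in> allv t \<or> (h = N \<and> \<not> inert_t t)" unfolding ts_def by (rule allv_star)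
    then have hN': "h = N" and ni: "\<not> inert_t t" using tN hN by force+
    obtain x b a where "snd (dec t) = App (Lam x b) a" using dec_ok[OF tnv ni] by blast
    then have "\<rho> h = App (Lam x b) a" using hN' tnv by (simp add: \<rho>_def orig_def)
    then show ?thesis by (rule om)
  next
    assume "\<exists>e\<in>set Es. h \<in> allv (snd e)"
    then obtain y u where yu: "(y,u) \<in> set E" and hin: "h \<in> allv (star (Suc (N + y)) u)"
      by (auto simp: Es_def stE_def)
    have "h \<in> allv u \<or> (h = Suc (N + y) \<and> \<not> inert_t u)" using hin by (rule allv_star)
    then have hy: "h = Suc (N + y)" and ni: "\<not> inert_t u" using EN[OF yu] hN by force+
    have rh: "\<rho> h = orig u" using \<rho>E[OF yu] hy by simp
    show ?thesis
    proof (cases "is_value u")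
      case False
      obtain x b a where "snd (dec u) = App (Lam x b) a" using dec_ok[OF False ni] by blast
      then have "\<rho> h = App (Lam x b) a" using rh False by (simp add: orig_def)
      then show ?thesis by (rule om)
    next
      case uv: True
      then have rhu: "\<rho> h = u" using rh by (simp add: orig_def)
      have sth: "star h u = Var h" using uv value_not_inert[OF uv] hy by (simp add: star_def)
      obtain E1 E2 where PsE: "Ps = PEnv ts E1 y Hole E2"
      proof (cases Ps)
        case (PCtx C E0)
        then have "cplug C (Var h) = ts" using Ps(2) by simp
        then have "h \<in> allv ts" using allv_cplug_in by metis
        then have "h \<in> allv t \<or> (h = N \<and> \<not> inert_t t)" unfolding ts_def by (rule allv_star)
        then show ?thesis using tN hN hy by force
      next
        case (PEnv u0 E1 x C E2)
        then have u0: "u0 = ts" and EsE: "Es = E1 @ (x, cplug C (Var h)) # E2" using Ps(2) by auto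
        have "(x, cplug C (Var h)) \<in> set Es" using EsE by simp
        then obtain y' u' where yu': "(y',u') \<in> set E" and xy: "x = y'" and cu: "cplug C (Var h) = star (Suc (N + y')) u'"
          by (auto simp: Es_def stE_def)
        have "h \<in> allv (star (Suc (N + y')) u')" using cu allv_cplug_in by metis
        then have "h \<in> allv u' \<or> (h = Suc (N + y') \<and> \<not> inert_t u')" by (rule allv_star)
        then have "y' = y" using EN[OF yu'] hN hy by force
        then have "u' = u" using yu yu' dist by (metis eq_key_imp_eq_value)
        then have "cplug C (Var h) = Var h" using cu sth hy \<open>y' = y\<close> by simp
        then have "C = Hole" by (cases C) auto
        then show ?thesis using that PEnv u0 xy \<open>y' = y\<close> by simp
      qed
      have Peq: "P = PEnv t (replE \<rho> E1) y Hole (replE \<rho> E2)" using PsE rt by (simp add: P_def)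
      obtain P' where P': "evctx (pext (pctx_app P' y u) (replE \<rho> E2)) (set ys)"
          "pplug P' (Var y, []) = (t, replE \<rho> E1)"
        using env_hole_inv[OF evP Peq] by blast
      define Q where "Q = pext (pctx_app P' y u) (replE \<rho> E2)"
      have "(t,E) = pplug Q (Var y, [])"
        using plugP Peq rhu P'(2) by (simp add: Q_def pext_plug pplug_app)
      moreover have "(y,u) \<in> set (pes Q)" by (simp add: Q_def pes_pext pes_app)
      ultimately have "step_oe (t,E) (pplug Q (u, []))" unfolding step_oe_def
        using P'(1) uv Q_def by blast
      then show ?thesis unfolding step_ond_def by blast
    qed
  qed
qed


theorem mainTheorem3:
  fixes p :: prog
  assumes "well_named p"
  shows "(\<not> (\<exists>q. step_ond p q)) \<longleftrightarrow> onorm p"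
proof -
  obtain t E where p: "p = (t, E)" by (cases p)
  show ?thesis
  proof
    assume "\<not> (\<exists>q. step_ond p q)"
    then show "onorm p" using step_of_not_onorm assms p by blast
  next
    assume "onorm p"
    then show "\<not> (\<exists>q. step_ond p q)" using onorm_nostep assms by blast
  qed
qed

end
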